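(* Let $n\ge2$, $d\ge1$, $\tau>0$, $\sigma>0$, with $\mu^\star_1,\mu^\star_2\stackrel{\mathrm{i.i.d.}}{\sim}\mathcal N(0,\tau^2I_d)$, $\xi_1,\dots,\xi_n\stackrel{\mathrm{i.i.d.}}{\sim}\mathcal N(0,\sigma^2I_d)$ independent, fixed labels $z^\star_i\in\{1,2\}$ with both classes $S^\star_\ell=\{i:z^\star_i=\ell\}$ nonempty, $x_i=\mu^\star_{z^\star_i}+\xi_i$, and a fixed partition $\{C_1,C_2\}$ of $[n]$ into nonempty sets. Let $i\in S^\star_\ell$ and let $C_{\overline j}$ be the cluster with $i\notin C_{\overline j}$. Then $$\Delta_H^2(x_i,C_{\overline j})=\frac{\|x_i-\widehat\mu_{\overline j}\|^2}{1+1/|C_{\overline j}|}\sim\eta\,\chi^2_d,\qquad \eta=2\tau^2\frac{|C_{\overline j}|}{|C_{\overline j}|+1}(1-R^\ell_{\overline j})^2+\sigma^2.$$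
   Context: $R^\ell_k=|C_k\cap S^\star_\ell|/|C_k|$; $\widehat\mu_k=|C_k|^{-1}\sum_{m\in C_k}x_m$. $\Delta_H^2$ is the Hartigan weighted distance, which for $i\notin C_k$ equals $\frac{|C_k|}{|C_k|+1}\|x_i-\widehat\mu_k\|^2$. "$Y\sim a\chi^2_d$" means $Y/a$ is chi-squared with $d$ degrees of freedom. Randomness is over the centers and noise. *)

theory Defs
  imports "HOL-Probability.Probability"
begin

text \<open>Index of the elementary real Gaussian coordinates:
  Ctr l k = k-th coordinate of the center mu*_l (l in {1,2}),
  Noise i k = k-th coordinate of the noise xi_i (i < n).\<close>
datatype src = Ctr nat nat | Noise nat nat

definition chi_squared_density :: "nat \<Rightarrow> real \<Rightarrow> real" where
  "chi_squared_density k x =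
     (if x > 0 then x powr (real k / 2 - 1) * exp (- x / 2)
                    / (2 powr (real k / 2) * Gamma (real k / 2))
      else 0)"

end

theory Submission
  imports Defs
begin

lemma chi_meas[measurable]: "chi_squared_density k \<in> borel_measurable borel"
  unfolding chi_squared_density_def by measurable

lemma chi_nonneg: "0 \<le> chi_squared_density k x"
proof (cases "k = 0")
  case True then show ?thesis by (simp add: chi_squared_density_def)
next
  case False
  then have "Gamma (real k / 2) > 0" by (intro Gamma_real_pos) simp
  then show ?thesis by (simp add: chi_squared_density_def)
qed

lemma chi1_sq:
  assumes x: "x > 0"
  shows "chi_squared_density 1 (x\<^sup>2) * (2 * x) = 2 * std_normal_density x"
proof -
  have a: "(x\<^sup>2) powr (real 1 / 2 - 1) = 1 / x"
  proof -
    have "(x\<^sup>2) powr (real 1 / 2 - 1) = (x\<^sup>2) powr (- (1/2))" by simp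
    also have "\<dots> = inverse ((x\<^sup>2) powr (1/2))" by (rule powr_minus)
    also have "(x\<^sup>2) powr (1/2) = sqrt (x\<^sup>2)" using x by (simp add: powr_half_sqrt)
    also have "sqrt (x\<^sup>2) = x" using x by simp
    finally show ?thesis by (simp add: inverse_eq_divide)
  qed
  have b: "(2::real) powr (real 1 / 2) = sqrt 2" by (simp add: powr_half_sqrt)
  have a': "(x\<^sup>2) powr (- (1 / 2)) = 1 / x" using a by simp
  have b': "(2::real) powr (1 / 2) = sqrt 2" by (simp add: powr_half_sqrt)
  show ?thesis using x
    unfolding chi_squared_density_def std_normal_density_def
    by (simp add: a' b' a b Gamma_one_half_real real_sqrt_mult field_simps)
qed

lemma chi1_half:
  fixes b :: real assumes b: "0 \<le> b"
  shows "(\<integral>\<^sup>+x. ennreal (chi_squared_density 1 x) * indicator {..b\<^sup>2} x \<partial>lborel)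
       = 2 * (\<integral>\<^sup>+x. ennreal (std_normal_density x) * indicator {0..b} x \<partial>lborel)"
proof (cases "b = 0")
  case True
  have "(\<lambda>x. ennreal (chi_squared_density 1 x) * indicator {..b\<^sup>2} x) = (\<lambda>x. 0)"
    by (auto simp: fun_eq_iff True chi_squared_density_def indicator_def)
  then have "(\<integral>\<^sup>+x. ennreal (chi_squared_density 1 x) * indicator {..b\<^sup>2} x \<partial>lborel) = (\<integral>\<^sup>+(x::real). 0 \<partial>lborel)"
    by simp
  moreover have "(\<integral>\<^sup>+x. ennreal (std_normal_density x) * indicator {0..b} x \<partial>lborel) = (\<integral>\<^sup>+(x::real). 0 \<partial>lborel)"
    by (intro nn_integral_cong_AE, rule AE_mp[OF AE_lborel_singleton[of 0]]) (auto simp: True indicator_def)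
  ultimately show ?thesis by simp
next
  case False
  with b have bpos: "0 < b" by simp
  have "(\<integral>\<^sup>+x. ennreal (chi_squared_density 1 x) * indicator {..b\<^sup>2} x \<partial>lborel)
      = (\<integral>\<^sup>+x. ennreal (chi_squared_density 1 x) * indicator {(0::real)\<^sup>2..b\<^sup>2} x \<partial>lborel)"
    by (intro nn_integral_cong) (auto simp: chi_squared_density_def indicator_def)
  also have "\<dots> = (\<integral>\<^sup>+x. ennreal (chi_squared_density 1 (x\<^sup>2)) * ennreal (2 * x) * indicator {0..b} x \<partial>lborel)"
    by (rule nn_integral_substitution_aux[where g="\<lambda>x. x\<^sup>2" and g'="\<lambda>x. 2 * x"])
       (auto intro!: derivative_eq_intros continuous_intros simp: bpos)
  also have "\<dots> = (\<integral>\<^sup>+x. 2 * (ennreal (std_normal_density x) * indicator {0..b} x) \<partial>lborel)"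
  proof (intro nn_integral_cong_AE, rule AE_mp[OF AE_lborel_singleton[of 0]], intro AE_I2 impI)
    fix x :: real assume "x \<noteq> 0"
    show "ennreal (chi_squared_density 1 (x\<^sup>2)) * ennreal (2 * x) * indicator {0..b} x =
          2 * (ennreal (std_normal_density x) * indicator {0..b} x)"
    proof (cases "x \<in> {0..b}")
      case True
      with \<open>x \<noteq> 0\<close> have xp: "x > 0" by auto
      have "ennreal (chi_squared_density 1 (x\<^sup>2)) * ennreal (2 * x) = ennreal (2 * std_normal_density x)"
      proof -
        have "0 \<le> 2 * x" using xp by simp
        from ennreal_mult[OF chi_nonneg[of 1 "x\<^sup>2"] this] chi1_sq[OF xp] show ?thesis by metis
      qed
      then show ?thesis using True by (simp add: ennreal_mult)
    qed simp
  qed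
  also have "\<dots> = 2 * (\<integral>\<^sup>+x. ennreal (std_normal_density x) * indicator {0..b} x \<partial>lborel)"
    by (rule nn_integral_cmult) measurable
  finally show ?thesis .
qed

lemma normal_sym_half:
  fixes b :: real assumes b: "0 \<le> b"
  shows "(\<integral>\<^sup>+x. ennreal (std_normal_density x) * indicator {-b..b} x \<partial>lborel)
       = 2 * (\<integral>\<^sup>+x. ennreal (std_normal_density x) * indicator {0..b} x \<partial>lborel)"
proof -
  let ?I = "(\<integral>\<^sup>+x. ennreal (std_normal_density x) * indicator {0..b} x \<partial>lborel)"
  have "(\<integral>\<^sup>+x. ennreal (std_normal_density x) * indicator {-b..b} x \<partial>lborel)
      = (\<integral>\<^sup>+x. ennreal (std_normal_density x) * indicator {0..b} x
               + ennreal (std_normal_density x) * indicator {0..b} (-x) \<partial>lborel)"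
    by (intro nn_integral_cong_AE, rule AE_mp[OF AE_lborel_singleton[of 0]])
       (auto simp: indicator_def)
  also have "\<dots> = ?I + (\<integral>\<^sup>+x. ennreal (std_normal_density x) * indicator {0..b} (-x) \<partial>lborel)"
    by (rule nn_integral_add) measurable
  also have "(\<integral>\<^sup>+x. ennreal (std_normal_density x) * indicator {0..b} (-x) \<partial>lborel)
       = ennreal \<bar>-1\<bar> * (\<integral>\<^sup>+x. ennreal (std_normal_density (0 + -1 * x)) * indicator {0..b} (-(0 + -1 * x)) \<partial>lborel)"
    by (rule nn_integral_real_affine) measurable
  also have "\<dots> = ?I"
    by (simp add: normal_density_def)
  finally show ?thesis by (simp add: mult_2)
qed

lemma (in prob_space) chi1_distributed:
  assumes W: "distributed M lborel W std_normal_density"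
  shows "distributed M lborel (\<lambda>\<omega>. (W \<omega>)\<^sup>2) (chi_squared_density 1)"
proof -
  have Wm[measurable]: "W \<in> borel_measurable M"
    using distributed_measurable[OF W] by simp
  have key: "(\<integral>\<^sup>+x. ennreal (chi_squared_density 1 x) * indicator {..a} x \<partial>lborel)
           = emeasure M {\<omega>\<in>space M. (W \<omega>)\<^sup>2 \<le> a}" for a
  proof (cases "a < 0")
    case True
    have "(\<lambda>x. ennreal (chi_squared_density 1 x) * indicator {..a} x) = (\<lambda>x. 0)"
      using True by (auto simp: fun_eq_iff chi_squared_density_def indicator_def)
    then have "(\<integral>\<^sup>+x. ennreal (chi_squared_density 1 x) * indicator {..a} x \<partial>lborel) = (\<integral>\<^sup>+(x::real). 0 \<partial>lborel)"
      by simp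
    moreover have e: "{\<omega>\<in>space M. (W \<omega>)\<^sup>2 \<le> a} = {}"
      using True by (auto simp: not_le intro: less_le_trans[OF _ zero_le_power2])
    ultimately show ?thesis unfolding e by simp
  next
    case False
    define b where "b = sqrt a"
    have b: "0 \<le> b" "a = b\<^sup>2" using False by (auto simp: b_def)
    have "{\<omega>\<in>space M. (W \<omega>)\<^sup>2 \<le> a} = W -` {-b..b} \<inter> space M"
      using b by (auto simp: abs_le_square_iff[symmetric] abs_le_iff)
    then have "emeasure M {\<omega>\<in>space M. (W \<omega>)\<^sup>2 \<le> a}
       = (\<integral>\<^sup>+x. ennreal (std_normal_density x) * indicator {-b..b} x \<partial>lborel)"
      using distributed_emeasure[OF W, of "{-b..b}"] by simp
    then show ?thesis
      using chi1_half[OF b(1)] normal_sym_half[OF b(1)] b(2) by simp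
  qed
  show ?thesis
  proof (rule distributedI_borel_atMost[where g="\<lambda>a. measure M {\<omega>\<in>space M. (W \<omega>)\<^sup>2 \<le> a}"])
    fix a
    show "(\<integral>\<^sup>+x. ennreal (chi_squared_density 1 x * indicator {..a} x) \<partial>lborel) =
      ennreal (measure M {\<omega>\<in>space M. (W \<omega>)\<^sup>2 \<le> a})"
      using key[of a] by (simp add: ennreal_indicator ennreal_mult' chi_nonneg emeasure_eq_measure)
  qed (auto simp: chi_nonneg emeasure_eq_measure)
qed

lemma chi_pos_eq: "x > 0 \<Longrightarrow> chi_squared_density k x =
   x powr (real k / 2 - 1) * exp (- x / 2) / (2 powr (real k / 2) * Gamma (real k / 2))"
  by (simp add: chi_squared_density_def)

lemma conv_chi_point:
  fixes a b :: nat and x :: real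
  assumes a: "a \<ge> 1" and b: "b \<ge> 1"
  shows "(\<integral>\<^sup>+y. ennreal (chi_squared_density a (x - y)) * ennreal (chi_squared_density b y) \<partial>lborel)
       = ennreal (chi_squared_density (a + b) x)"
proof (cases "x > 0")
  case False
  have "(\<lambda>y. ennreal (chi_squared_density a (x - y)) * ennreal (chi_squared_density b y)) = (\<lambda>y. 0)"
    using False by (auto simp: fun_eq_iff chi_squared_density_def)
  then show ?thesis using False by (simp add: chi_squared_density_def)
next
  case True
  define p where "p = real a / 2"
  define q where "q = real b / 2"
  have p: "p > 0" and q: "q > 0" using a b by (auto simp: p_def q_def)
  define Ka where "Ka = 2 powr p * Gamma p"
  define Kb where "Kb = 2 powr q * Gamma q"
  have Ka: "Ka > 0" and Kb: "Kb > 0" using p q by (auto simp: Ka_def Kb_def)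
  define G where "G y = indicator {0<..<x} y * ((x - y) powr (p - 1) * y powr (q - 1) * exp (- x / 2) / (Ka * Kb))" for y
  define C0 where "C0 = x powr (p - 1) * x powr (q - 1) * exp (- x / 2) / (Ka * Kb)"
  define f where "f s = s powr (q - 1) * (1 - s) powr (p - 1)" for s :: real
  have Gm[measurable]: "G \<in> borel_measurable borel" unfolding G_def by measurable
  have "(\<integral>\<^sup>+y. ennreal (chi_squared_density a (x - y)) * ennreal (chi_squared_density b y) \<partial>lborel)
      = (\<integral>\<^sup>+y. ennreal (G y) \<partial>lborel)"
  proof (intro nn_integral_cong)
    fix y :: real
    show "ennreal (chi_squared_density a (x - y)) * ennreal (chi_squared_density b y) = ennreal (G y)"
    proof (cases "0 < y \<and> y < x")
      case True
      then have "chi_squared_density a (x - y) * chi_squared_density b y = G y"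
        by (simp add: chi_pos_eq G_def p_def[symmetric] q_def[symmetric] Ka_def Kb_def
              mult_exp_exp field_simps)
      then show ?thesis by (simp add: ennreal_mult'[symmetric] chi_nonneg)
    next
      case False
      then have "chi_squared_density a (x - y) = 0 \<or> chi_squared_density b y = 0"
        by (auto simp: chi_squared_density_def)
      moreover have "G y = 0" using False by (auto simp: G_def)
      ultimately show ?thesis by auto
    qed
  qed
  also have "\<dots> = ennreal \<bar>x\<bar> * (\<integral>\<^sup>+s. ennreal (G (0 + x * s)) \<partial>lborel)"
    using True by (intro nn_integral_real_affine) auto
  also have "(\<integral>\<^sup>+s. ennreal (G (0 + x * s)) \<partial>lborel)
      = (\<integral>\<^sup>+s. ennreal C0 * (ennreal (f s) * indicator {0..1} s) \<partial>lborel)"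
  proof (intro nn_integral_cong)
    fix s :: real
    show "ennreal (G (0 + x * s)) = ennreal C0 * (ennreal (f s) * indicator {0..1} s)"
    proof (cases "0 < s \<and> s < 1")
      case True
      have "x - s * x = x * (1 - s)" by (simp add: algebra_simps)
      then have hx: "(x - s * x) powr (p - 1) = x powr (p - 1) * (1 - s) powr (p - 1)"
        using True \<open>x > 0\<close> by (simp add: powr_mult)
      have "G (0 + x * s) = C0 * f s"
        using True \<open>x > 0\<close>
        using powr_mult[of s x "q - 1"]
        by (simp add: G_def C0_def f_def hx field_simps mult_less_cancel_left1)
      moreover have "0 \<le> C0" "0 \<le> f s" using Ka Kb True by (auto simp: C0_def f_def)
      ultimately show ?thesis using True by (simp add: ennreal_mult')
    next
      case False
      have "x * s \<notin> {0<..<x}"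
      proof
        assume "x * s \<in> {0<..<x}"
        then have "0 < x * s" "x * s < x * 1" by auto
        then show False using False \<open>x > 0\<close> by (simp add: zero_less_mult_iff)
      qed
      then have "G (0 + x * s) = 0" by (simp add: G_def)
      moreover have "f s * indicator {0..1} s = 0"
        using False by (auto simp: f_def indicator_def)
      ultimately show ?thesis
        by (cases "s \<in> {0..1}") auto
    qed
  qed
  also have "\<dots> = ennreal C0 * (\<integral>\<^sup>+s. ennreal (f s) * indicator {0..1} s \<partial>lborel)"
    by (rule nn_integral_cmult) (simp add: f_def)
  also have "(\<integral>\<^sup>+s. ennreal (f s) * indicator {0..1} s \<partial>lborel) = ennreal (Beta q p)"
    unfolding f_def
    by (rule nn_integral_has_integral_lebesgue'[OF _ has_integral_Beta_real[OF q p]]) auto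
  finally have eq: "(\<integral>\<^sup>+y. ennreal (chi_squared_density a (x - y)) * ennreal (chi_squared_density b y) \<partial>lborel)
      = ennreal (x * C0 * Beta q p)"
    using True Ka Kb by (simp add: ennreal_mult'[symmetric] C0_def mult.assoc)
  have "x * C0 * Beta q p = chi_squared_density (a + b) x"
  proof -
    have g: "Gamma (p + q) > 0" using p q by simp
    have h: "real (a + b) / 2 = p + q" by (simp add: p_def q_def add_divide_distrib)
    have "chi_squared_density (a + b) x = x powr (p + q - 1) * exp (- x / 2) / (2 powr (p + q) * Gamma (p + q))"
      by (subst chi_pos_eq[OF True]) (simp only: h)
    also have "x powr (p + q - 1) = x * x powr (p - 1) * x powr (q - 1)"
      using True by (simp add: powr_add[symmetric] powr_diff)
    also have "2 powr (p + q) = 2 powr p * 2 powr q" by (simp add: powr_add)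
    finally have E: "chi_squared_density (a + b) x = x * x powr (p - 1) * x powr (q - 1) * exp (- x / 2) / (2 powr p * 2 powr q * Gamma (p + q))" .
    have n1: "Gamma p \<noteq> 0" using Gamma_real_pos[OF p] by linarith
    have n2: "Gamma q \<noteq> 0" using Gamma_real_pos[OF q] by linarith
    have n3: "Gamma (p + q) \<noteq> 0" using g by linarith
    note n = n1 n2 n3
    show ?thesis unfolding E C0_def Ka_def Kb_def Beta_def using n by (simp add: field_simps)
  qed
  with eq show ?thesis by simp
qed

lemma (in prob_space) chi_sum:
  assumes "finite I" "I \<noteq> {}" "indep_vars (\<lambda>_. borel) Q I"
    "\<And>i. i \<in> I \<Longrightarrow> distributed M lborel (Q i) (chi_squared_density 1)"
  shows "distributed M lborel (\<lambda>\<omega>. \<Sum>i\<in>I. Q i \<omega>) (chi_squared_density (card I))"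
  using assms
proof (induct I rule: finite_ne_induct)
  case (singleton i) then show ?case by simp
next
  case (insert i I)
  have ind: "indep_var borel (Q i) borel (\<lambda>\<omega>. \<Sum>i\<in>I. Q i \<omega>)"
    using insert by (intro indep_vars_sum) auto
  have S: "distributed M lborel (\<lambda>\<omega>. \<Sum>i\<in>I. Q i \<omega>) (chi_squared_density (card I))"
    using insert by (intro insert.hyps(4)) (auto intro: indep_vars_subset)
  have "card I \<ge> 1" using insert by (simp add: Suc_le_eq card_gt_0_iff)
  then have eq: "(\<lambda>x. \<integral>\<^sup>+y. ennreal (chi_squared_density 1 (x - y)) * ennreal (chi_squared_density (card I) y) \<partial>lborel)
     = (\<lambda>x. ennreal (chi_squared_density (card (insert i I)) x))"
    using insert by (simp add: conv_chi_point)
  have "distributed M lborel (\<lambda>\<omega>. Q i \<omega> + (\<Sum>i\<in>I. Q i \<omega>))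
     (\<lambda>x. \<integral>\<^sup>+y. ennreal (chi_squared_density 1 (x - y)) * ennreal (chi_squared_density (card I) y) \<partial>lborel)"
    by (rule distributed_convolution[OF ind insert.prems(2)[OF insertI1] S])
  then show ?case using insert unfolding eq by simp
qed

theorem corollaryD1:
  fixes M :: "'a measure" and X :: "src \<Rightarrow> 'a \<Rightarrow> real"
    and n d :: nat and \<tau> \<sigma> :: real and z :: "nat \<Rightarrow> nat"
    and C C' :: "nat set" and i :: nat
  assumes "prob_space M"
    and "n \<ge> 2" and "d \<ge> 1" and "\<tau> > 0" and "\<sigma> > 0"
    and indep: "prob_space.indep_vars M (\<lambda>_. borel) X
           ({Ctr l k | l k. l \<in> {1,2} \<and> k < d} \<union> {Noise m k | m k. m < n \<and> k < d})"
    and ctr: "\<And>l k. l \<in> {1,2} \<Longrightarrow> k < d \<Longrightarrow>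
                distributed M lborel (X (Ctr l k)) (normal_density 0 \<tau>)"
    and noise: "\<And>m k. m < n \<Longrightarrow> k < d \<Longrightarrow>
                distributed M lborel (X (Noise m k)) (normal_density 0 \<sigma>)"
    and labels: "\<And>m. m < n \<Longrightarrow> z m \<in> {1,2}"
    and classes: "\<And>l. l \<in> {1,2} \<Longrightarrow> {m. m < n \<and> z m = l} \<noteq> {}"
    and part: "C \<union> C' = {..<n}" "C \<inter> C' = {}" "C \<noteq> {}" "C' \<noteq> {}"
    and i: "i < n" "i \<notin> C"
  shows
    "let x = (\<lambda>m k \<omega>. X (Ctr (z m) k) \<omega> + X (Noise m k) \<omega>);
         muhat = (\<lambda>k \<omega>. (\<Sum>m\<in>C. x m k \<omega>) / real (card C));
         DeltaH = (\<lambda>\<omega>. (\<Sum>k<d. (x i k \<omega> - muhat k \<omega>)\<^sup>2) / (1 + 1 / real (card C)));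
         R = real (card (C \<inter> {m. m < n \<and> z m = z i})) / real (card C);
         \<eta> = 2 * \<tau>\<^sup>2 * (real (card C) / (real (card C) + 1)) * (1 - R)\<^sup>2 + \<sigma>\<^sup>2
     in distributed M lborel (\<lambda>\<omega>. DeltaH \<omega> / \<eta>) (chi_squared_density d)"
proof -
  interpret prob_space M by fact
  define l where "l = z i"
  define l' where "l' = 3 - l"
  have l: "l \<in> {1,2}" using labels[OF i(1)] by (simp add: l_def)
  have l': "l' \<in> {1,2}" "l' \<noteq> l" using l by (auto simp: l'_def)
  have Csub: "C \<subseteq> {..<n}" using part(1) by auto
  have finC: "finite C" using Csub finite_subset by blast
  define c where "c = card C"
  have cpos: "real c > 0" using finC part(3) by (simp add: c_def card_gt_0_iff)
  define r where "r = card (C \<inter> {m. m < n \<and> z m = z i})"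
  define R where "R = real r / real c"
  define v where "v = 2 * \<tau>\<^sup>2 * (1 - R)\<^sup>2 + \<sigma>\<^sup>2 * (1 + 1 / real c)"
  have "0 < 1 + 1 / real c" using cpos by (intro add_pos_pos) auto
  then have "0 < \<sigma>\<^sup>2 * (1 + 1 / real c)" using \<open>\<sigma> > 0\<close> by simp
  then have vpos: "v > 0" unfolding v_def
    by (intro add_nonneg_pos) auto
  define co where "co s = (case s of Ctr l0 k \<Rightarrow> if l0 = l then 1 - R else - (1 - R)
                              | Noise m k \<Rightarrow> if m = i then 1 else - 1 / real c)" for s
  define sd where "sd s = (case s of Ctr l0 k \<Rightarrow> \<tau> | Noise m k \<Rightarrow> \<sigma>)" for s
  define S where "S k = {Ctr l k, Ctr l' k, Noise i k} \<union> (\<lambda>m. Noise m k) ` C" for k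
  define Idx where "Idx = {Ctr l k | l k. l \<in> {1,2} \<and> k < d} \<union> {Noise m k | m k. m < n \<and> k < d}"
  have finS: "finite (S k)" for k using finC by (simp add: S_def)
  have SIdx: "S k \<subseteq> Idx" if "k < d" for k
    using that l l' i Csub by (auto simp: S_def Idx_def)
  have sumS: "(\<Sum>s\<in>S k. g s) = g (Ctr l k) + g (Ctr l' k) + g (Noise i k) + (\<Sum>m\<in>C. g (Noise m k))"
    for k and g :: "src \<Rightarrow> real"
  proof -
    have "S k = insert (Ctr l k) (insert (Ctr l' k) (insert (Noise i k) ((\<lambda>m. Noise m k) ` C)))"
      by (auto simp: S_def)
    moreover have "Ctr l k \<notin> insert (Ctr l' k) (insert (Noise i k) ((\<lambda>m. Noise m k) ` C))"
      using l' by auto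
    moreover have "Ctr l' k \<notin> insert (Noise i k) ((\<lambda>m. Noise m k) ` C)" by auto
    moreover have "Noise i k \<notin> (\<lambda>m. Noise m k) ` C" using i(2) by auto
    moreover have "(\<Sum>s\<in>(\<lambda>m. Noise m k) ` C. g s) = (\<Sum>m\<in>C. g (Noise m k))"
      by (subst sum.reindex) (auto simp: inj_on_def)
    ultimately show ?thesis using finC by (simp add: add.assoc)
  qed
  define Y where "Y k \<omega> = (X (Ctr (z i) k) \<omega> + X (Noise i k) \<omega>) -
      (\<Sum>m\<in>C. X (Ctr (z m) k) \<omega> + X (Noise m k) \<omega>) / real (card C)" for k \<omega>
  define A where "A = C \<inter> {m. z m = l}"
  define B where "B = C \<inter> {m. z m = l'}"
  have zC: "z m \<in> {1,2}" if "m \<in> C" for m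
    using labels[of m] Csub that by auto
  have CAB1: "C = A \<union> B"
  proof (intro equalityI subsetI)
    fix m assume m: "m \<in> C"
    have "z m \<in> {1,2}" using zC[OF m] .
    then have "z m = l \<or> z m = l'" using l by (auto simp: l'_def)
    then show "m \<in> A \<union> B" using m by (auto simp: A_def B_def)
  qed (auto simp: A_def B_def)
  have CAB2: "A \<inter> B = {}" using l' by (auto simp: A_def B_def)
  note CAB = CAB1 CAB2
  have finAB: "finite A" "finite B" using finC by (auto simp: A_def B_def)
  have cardA: "card A = r" unfolding r_def A_def l_def using Csub by (intro arg_cong[where f=card]) auto
  have cardAB: "real c = real r + real (card B)"
    unfolding c_def using CAB finAB cardA by (simp add: card_Un_disjoint)
  have split: "(\<Sum>m\<in>C. X (Ctr (z m) k) \<omega>) = real r * X (Ctr l k) \<omega> + (real c - real r) * X (Ctr l' k) \<omega>"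
    for k \<omega>
  proof -
    have "(\<Sum>m\<in>C. X (Ctr (z m) k) \<omega>) = (\<Sum>m\<in>A. X (Ctr (z m) k) \<omega>) + (\<Sum>m\<in>B. X (Ctr (z m) k) \<omega>)"
      using CAB finAB by (simp add: sum.union_disjoint)
    also have "(\<Sum>m\<in>A. X (Ctr (z m) k) \<omega>) = (\<Sum>m\<in>A. X (Ctr l k) \<omega>)"
      by (rule sum.cong) (auto simp: A_def)
    also have "(\<Sum>m\<in>B. X (Ctr (z m) k) \<omega>) = (\<Sum>m\<in>B. X (Ctr l' k) \<omega>)"
      by (rule sum.cong) (auto simp: B_def)
    finally show ?thesis using cardA cardAB by simp
  qed
  have Yeq: "Y k \<omega> = (\<Sum>s\<in>S k. co s * X s \<omega>)" for k \<omega>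
  proof -
    have n1: "(\<Sum>m\<in>C. co (Noise m k) * X (Noise m k) \<omega>) = - (\<Sum>m\<in>C. X (Noise m k) \<omega>) / real c"
    proof -
      have "(\<Sum>m\<in>C. co (Noise m k) * X (Noise m k) \<omega>) = (\<Sum>m\<in>C. - (X (Noise m k) \<omega> / real c))"
        using i(2) by (intro sum.cong) (auto simp: co_def)
      also have "\<dots> = - (\<Sum>m\<in>C. X (Noise m k) \<omega>) / real c"
        by (simp add: sum_negf sum_divide_distrib)
      finally show ?thesis .
    qed
    have "(\<Sum>s\<in>S k. co s * X s \<omega>) = (1 - R) * X (Ctr l k) \<omega> - (1 - R) * X (Ctr l' k) \<omega>
        + X (Noise i k) \<omega> - (\<Sum>m\<in>C. X (Noise m k) \<omega>) / real c"
      unfolding sumS n1 using l' by (simp add: co_def algebra_simps)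
    moreover have "Y k \<omega> = X (Ctr l k) \<omega> + X (Noise i k) \<omega> -
        (real r * X (Ctr l k) \<omega> + (real c - real r) * X (Ctr l' k) \<omega> + (\<Sum>m\<in>C. X (Noise m k) \<omega>)) / real c"
      unfolding Y_def sum.distrib split by (simp add: l_def c_def)
    moreover have "(real r * X (Ctr l k) \<omega> + (real c - real r) * X (Ctr l' k) \<omega> + (\<Sum>m\<in>C. X (Noise m k) \<omega>)) / real c
        = R * X (Ctr l k) \<omega> + (1 - R) * X (Ctr l' k) \<omega> + (\<Sum>m\<in>C. X (Noise m k) \<omega>) / real c"
      using cpos by (simp add: R_def field_simps)
    ultimately show ?thesis by (simp add: algebra_simps)
  qed
  have Xdist: "distributed M lborel (X s) (normal_density 0 (sd s))" "sd s > 0"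
    if "s \<in> S k" "k < d" for s k
    using that l l' i Csub ctr noise \<open>\<tau> > 0\<close> \<open>\<sigma> > 0\<close> by (auto simp: S_def sd_def)
  have varS: "(\<Sum>s\<in>S k. (co s * sd s)\<^sup>2) = v" for k
  proof -
    have "(\<Sum>m\<in>C. (co (Noise m k) * sd (Noise m k))\<^sup>2) = (\<Sum>m\<in>C. (\<sigma> / real c)\<^sup>2)"
      using i(2) by (intro sum.cong) (auto simp: co_def sd_def power2_eq_square)
    also have "\<dots> = real c * (\<sigma> / real c)\<^sup>2" by (simp add: c_def)
    finally have e: "(\<Sum>m\<in>C. (co (Noise m k) * sd (Noise m k))\<^sup>2) = real c * (\<sigma> / real c)\<^sup>2" .
    show ?thesis unfolding sumS e using l' cpos
      by (simp add: co_def sd_def v_def power2_eq_square field_simps)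
  qed
  have Ynorm: "distributed M lborel (Y k) (normal_density 0 (sqrt v))" if k: "k < d" for k
  proof -
    define J where "J = {s\<in>S k. co s \<noteq> 0}"
    have JS: "J \<subseteq> S k" by (auto simp: J_def)
    have finJ: "finite J" using finS JS finite_subset by blast
    have Jne: "J \<noteq> {}"
    proof -
      have "Noise i k \<in> J" by (auto simp: J_def S_def co_def)
      then show ?thesis by auto
    qed
    have YJ: "Y k = (\<lambda>\<omega>. \<Sum>s\<in>J. co s * X s \<omega>)"
    proof
      fix \<omega>
      show "Y k \<omega> = (\<Sum>s\<in>J. co s * X s \<omega>)"
        unfolding Yeq by (rule sum.mono_neutral_right[OF finS JS]) (auto simp: J_def)
    qed
    have indJ: "indep_vars (\<lambda>_. borel) (\<lambda>s \<omega>. co s * X s \<omega>) J"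
      using indep_vars_compose2[OF indep_vars_subset[OF indep], of J "\<lambda>s x. co s * x" "\<lambda>_. borel"]
        JS SIdx[OF k] unfolding Idx_def by auto
    have distJ: "distributed M lborel (\<lambda>\<omega>. co s * X s \<omega>) (normal_density 0 (\<bar>co s\<bar> * sd s))"
      and posJ: "0 < \<bar>co s\<bar> * sd s" if s: "s \<in> J" for s
    proof -
      have sS: "s \<in> S k" "co s \<noteq> 0" using s by (auto simp: J_def)
      from normal_density_affine[OF Xdist(1)[OF sS(1) k] Xdist(2)[OF sS(1) k] sS(2), of 0]
      show "distributed M lborel (\<lambda>\<omega>. co s * X s \<omega>) (normal_density 0 (\<bar>co s\<bar> * sd s))" by simp
      show "0 < \<bar>co s\<bar> * sd s" using Xdist(2)[OF sS(1) k] sS(2) by simp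
    qed
    have "distributed M lborel (\<lambda>\<omega>. \<Sum>s\<in>J. co s * X s \<omega>)
        (normal_density (\<Sum>s\<in>J. 0) (sqrt (\<Sum>s\<in>J. (\<bar>co s\<bar> * sd s)\<^sup>2)))"
      by (rule sum_indep_normal[OF finJ Jne indJ posJ distJ])
    moreover have "(\<Sum>s\<in>J. (\<bar>co s\<bar> * sd s)\<^sup>2) = v"
    proof -
      have "(\<Sum>s\<in>J. (\<bar>co s\<bar> * sd s)\<^sup>2) = (\<Sum>s\<in>J. (co s * sd s)\<^sup>2)"
        by (simp add: power_mult_distrib)
      also have "\<dots> = (\<Sum>s\<in>S k. (co s * sd s)\<^sup>2)"
        by (rule sum.mono_neutral_right[OF finS JS, symmetric]) (auto simp: J_def)
      finally show ?thesis using varS by simp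
    qed
    ultimately show ?thesis unfolding YJ by simp
  qed
  define Q where "Q k \<omega> = (Y k \<omega> / sqrt v)\<^sup>2" for k \<omega>
  have Qdist: "distributed M lborel (Q k) (chi_squared_density 1)" if k: "k < d" for k
  proof -
    have sv: "sqrt v > 0" using vpos by simp
    from normal_density_affine[OF Ynorm[OF k] sv, of "1 / sqrt v" 0]
    have "distributed M lborel (\<lambda>\<omega>. Y k \<omega> / sqrt v) std_normal_density"
      using sv by simp
    from chi1_distributed[OF this] show ?thesis unfolding Q_def by simp
  qed
  have R1: "indep_vars (\<lambda>k. PiM (S k) (\<lambda>_. borel)) (\<lambda>k \<omega>. restrict (\<lambda>s. X s \<omega>) (S k)) {..<d}"
  proof (rule indep_vars_restrict[OF indep[folded Idx_def]])
    show "S k \<subseteq> Idx" if "k \<in> {..<d}" for k using SIdx that by simp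
    show "disjoint_family_on S {..<d}"
      unfolding disjoint_family_on_def S_def by auto
  qed
  have meas: "(\<lambda>f. ((\<Sum>s\<in>S k. co s * f s) / sqrt v)\<^sup>2) \<in> borel_measurable (PiM (S k) (\<lambda>_. borel))" for k
    by (intro borel_measurable_power borel_measurable_divide borel_measurable_sum
        borel_measurable_times measurable_const measurable_component_singleton) auto
  have R2: "indep_vars (\<lambda>_. borel) (\<lambda>k \<omega>. ((\<Sum>s\<in>S k. co s * restrict (\<lambda>s. X s \<omega>) (S k) s) / sqrt v)\<^sup>2) {..<d}"
    by (rule indep_vars_compose2[OF R1, where Y="\<lambda>k f. ((\<Sum>s\<in>S k. co s * f s) / sqrt v)\<^sup>2"]) (rule meas)
  have Qind: "indep_vars (\<lambda>_. borel) Q {..<d}"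
  proof -
    have "(\<lambda>\<omega>. ((\<Sum>s\<in>S k. co s * restrict (\<lambda>s. X s \<omega>) (S k) s) / sqrt v)\<^sup>2) = Q k" for k
      by (auto simp: Q_def Yeq fun_eq_iff intro!: sum.cong arg_cong[where f="\<lambda>t. (t / sqrt v)\<^sup>2"])
    then show ?thesis using R2 by simp
  qed
  have final: "distributed M lborel (\<lambda>\<omega>. \<Sum>k<d. Q k \<omega>) (chi_squared_density d)"
  proof -
    have ne: "{..<d} \<noteq> {}" using \<open>d \<ge> 1\<close> lessThan_empty_iff[of d] by simp
    show ?thesis using chi_sum[OF finite_lessThan ne Qind Qdist] by simp
  qed
  have feq: "(\<Sum>k<d. (Y k \<omega>)\<^sup>2) / (1 + 1 / real c) / (2 * \<tau>\<^sup>2 * (real c / (real c + 1)) * (1 - R)\<^sup>2 + \<sigma>\<^sup>2)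
      = (\<Sum>k<d. Q k \<omega>)" for \<omega>
  proof -
    have "(1 + 1 / real c) * (2 * \<tau>\<^sup>2 * (real c / (real c + 1)) * (1 - R)\<^sup>2 + \<sigma>\<^sup>2) = v"
    proof -
      have e1: "1 + 1 / real c = (real c + 1) / real c" using cpos by (simp add: field_simps)
      have c1: "real c + 1 \<noteq> 0" "real c \<noteq> 0" using cpos by linarith+
      have h: "(1 + 1 / real c) * (real c / (real c + 1)) = 1" unfolding e1 using c1 by simp
      have "(1 + 1 / real c) * (2 * \<tau>\<^sup>2 * (real c / (real c + 1)) * (1 - R)\<^sup>2 + \<sigma>\<^sup>2)
          = ((1 + 1 / real c) * (real c / (real c + 1))) * (2 * \<tau>\<^sup>2 * (1 - R)\<^sup>2) + \<sigma>\<^sup>2 * (1 + 1 / real c)"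
        by (simp add: algebra_simps)
      also have "\<dots> = v" unfolding h v_def by simp
      finally show ?thesis .
    qed
    then have "(\<Sum>k<d. (Y k \<omega>)\<^sup>2) / (1 + 1 / real c) / (2 * \<tau>\<^sup>2 * (real c / (real c + 1)) * (1 - R)\<^sup>2 + \<sigma>\<^sup>2)
        = (\<Sum>k<d. (Y k \<omega>)\<^sup>2) / v" by (simp add: divide_divide_eq_left)
    also have "\<dots> = (\<Sum>k<d. Q k \<omega>)"
      using vpos by (simp add: Q_def sum_divide_distrib power_divide)
    finally show ?thesis .
  qed
  show ?thesis
    unfolding Let_def unfolding Y_def[symmetric] unfolding r_def[symmetric] c_def[symmetric]
    unfolding R_def[symmetric] feq
    by (rule final)
qed

end
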